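(* Let $F$, $X_0$, $B$, $C$ be as in the context, and let $X(t)=\sum_{p=0}^\infty X_pt^p$ be an analytic family of solutions of $F(X)=0$ with initial term $X_0$. Suppose $X_3$ and $X_4$ belong to the linear span $L$ of $X_1$ and $X_2$. Then for all $i,j\in\{1,2\}$ the linear system $CX=-B(X_i,X_j)-B(X_j,X_i)$ has a solution $X\in L$.
   Context: Let $m,n\ge 1$ and let $F=(F_1,\dots,F_n):\mathbb{R}^m\to\mathbb{R}^n$, where each component is a polynomial of degree at most 2 written as $F_k(X)=\sum_{i=1}^m\sum_{j=1}^m\alpha^k_{ij}x_ix_j+\sum_{i=1}^m\beta^k_ix_i+\gamma^k$ for $X=(x_1,\dots,x_m)$, with real coefficients and $\alpha^k_{ij}=\alpha^k_{ji}$. Fix $X_0\in\mathbb{R}^m$ with $F(X_0)=0$. Define the bilinear map $B:\mathbb{R}^m\times\mathbb{R}^m\to\mathbb{R}^n$ by $B(X,Y)_k=\sum_{i,j=1}^m\alpha^k_{ij}x_iy_j$, the linear map $A:\mathbb{R}^m\to\mathbb{R}^n$ by $(AX)_k=\sum_{i=1}^m\beta^k_ix_i$, and the linear map $C:\mathbb{R}^m\to\mathbb{R}^n$ by $CX=B(X_0,X)+B(X,X_0)+AX$. An analytic family of solutions with initial term $X_0$ is a power series $X(t)=\sum_{p=0}^\infty X_pt^p$ with $X_p\in\mathbb{R}^m$, positive radius of convergence, constant term equal to $X_0$, and $F(X(t))=0$ for all sufficiently small $t$. *)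

theory Defs
  imports "HOL-Analysis.Analysis"
begin

text \<open>Coefficients: alpha k i j, beta k i, gamma k, indexed by finite types
  'n (components of F, i.e. R^n) and 'm (variables, i.e. R^m).\<close>

definition quadF :: "('n \<Rightarrow> 'm::finite \<Rightarrow> 'm \<Rightarrow> real) \<Rightarrow> ('n \<Rightarrow> 'm \<Rightarrow> real) \<Rightarrow> ('n \<Rightarrow> real)
    \<Rightarrow> real^'m \<Rightarrow> real^'n::finite" where
  "quadF \<alpha> \<beta> \<gamma> X = (\<chi> k. (\<Sum>i\<in>UNIV. \<Sum>j\<in>UNIV. \<alpha> k i j * X$i * X$j)
                          + (\<Sum>i\<in>UNIV. \<beta> k i * X$i) + \<gamma> k)"

definition bilinB :: "('n \<Rightarrow> 'm::finite \<Rightarrow> 'm \<Rightarrow> real) \<Rightarrow> real^'m \<Rightarrow> real^'m \<Rightarrow> real^'n::finite" where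
  "bilinB \<alpha> X Y = (\<chi> k. \<Sum>i\<in>UNIV. \<Sum>j\<in>UNIV. \<alpha> k i j * X$i * Y$j)"

definition linA :: "('n \<Rightarrow> 'm::finite \<Rightarrow> real) \<Rightarrow> real^'m \<Rightarrow> real^'n::finite" where
  "linA \<beta> X = (\<chi> k. \<Sum>i\<in>UNIV. \<beta> k i * X$i)"

definition linC :: "('n \<Rightarrow> 'm::finite \<Rightarrow> 'm \<Rightarrow> real) \<Rightarrow> ('n \<Rightarrow> 'm \<Rightarrow> real) \<Rightarrow> real^'m
    \<Rightarrow> real^'m \<Rightarrow> real^'n::finite" where
  "linC \<alpha> \<beta> X0 X = bilinB \<alpha> X0 X + bilinB \<alpha> X X0 + linA \<beta> X"

definition analytic_family :: "('n \<Rightarrow> 'm::finite \<Rightarrow> 'm \<Rightarrow> real) \<Rightarrow> ('n::finite \<Rightarrow> 'm \<Rightarrow> real)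
    \<Rightarrow> ('n \<Rightarrow> real) \<Rightarrow> real^'m \<Rightarrow> (nat \<Rightarrow> real^'m) \<Rightarrow> bool" where
  "analytic_family \<alpha> \<beta> \<gamma> X0 Xs \<longleftrightarrow>
     Xs 0 = X0 \<and>
     (\<exists>r>0. \<forall>t::real. \<bar>t\<bar> < r \<longrightarrow> summable (\<lambda>p. t^p *\<^sub>R Xs p)) \<and>
     (\<forall>\<^sub>F t in nhds (0::real). quadF \<alpha> \<beta> \<gamma> (\<Sum>p. t^p *\<^sub>R Xs p) = 0)"

end

theory Submission
  imports Defs
begin

lemma powser_unique_zero:
  fixes e :: "nat \<Rightarrow> real"
  assumes r: "0 < r" and sm: "\<And>t. \<bar>t\<bar> < r \<Longrightarrow> (\<lambda>p. e p * t^p) sums g t"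
    and ev: "eventually (\<lambda>t. g t = 0) (nhds 0)"
  shows "e n = 0"
proof -
  obtain d where d: "d > 0" "\<And>t. \<bar>t\<bar> < d \<Longrightarrow> g t = 0"
    using ev unfolding eventually_nhds_metric dist_real_def by auto
  have "e n = 0 \<and> (\<exists>s>0. \<forall>t. t \<noteq> 0 \<and> \<bar>t\<bar> < s \<longrightarrow> (\<lambda>p. e (p+n) * t^p) sums 0)" for n
  proof (induction n)
    case 0
    have *: "\<forall>t. t \<noteq> 0 \<and> \<bar>t\<bar> < min r d \<longrightarrow> (\<lambda>p. e (p+0) * t^p) sums 0"
    proof (intro allI impI)
      fix t :: real assume "t \<noteq> 0 \<and> \<bar>t\<bar> < min r d"
      then have "(\<lambda>p. e p * t^p) sums g t" "g t = 0" using sm[of t] d(2)[of t] by auto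
      then show "(\<lambda>p. e (p+0) * t^p) sums 0" by simp
    qed
    have "((\<lambda>_. 0::real) \<longlongrightarrow> e (0+0)) (at (0::real))"
      apply (rule powser_limit_0_strong[of "min r d" "\<lambda>p. e (p+0)" "\<lambda>_. 0"])
      using r d * by auto
    then have "0 = e (0+0)" by (rule LIM_const_eq)
    then have "e 0 = 0" by simp
    moreover have "min r d > 0" using r d by simp
    ultimately show ?case using * by (intro conjI exI[of _ "min r d"]) auto
  next
    case (Suc n)
    then have en: "e n = 0" by (rule conjunct1)
    from Suc.IH obtain s where s0: "s > 0" and s1: "\<forall>t. t \<noteq> 0 \<and> \<bar>t\<bar> < s \<longrightarrow> (\<lambda>p. e (p+n) * t^p) sums 0"
      by (elim conjE exE)
    have s: "s > 0" "\<And>t. t \<noteq> 0 \<Longrightarrow> \<bar>t\<bar> < s \<Longrightarrow> (\<lambda>p. e (p+n) * t^p) sums 0"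
      using s0 s1 by auto
    have *: "(\<lambda>p. e (p + Suc n) * t^p) sums 0" if "t \<noteq> 0" "\<bar>t\<bar> < s" for t
    proof -
      have "(\<lambda>p. e (p+n) * t^p) sums (0 + e (0+n) * t^0)" using s(2)[OF that] en by simp
      then have "(\<lambda>p. e (Suc p+n) * t^(Suc p)) sums 0"
        using sums_Suc_iff[of "\<lambda>p. e (p+n) * t^p" 0] by simp
      then have "(\<lambda>p. (e (Suc p+n) * t^(Suc p)) * (1/t)) sums (0 * (1/t))"
        by (rule sums_mult2)
      moreover have "(\<lambda>p. (e (Suc p+n) * t^(Suc p)) * (1/t)) = (\<lambda>p. e (p + Suc n) * t^p)"
        using that by (auto simp: fun_eq_iff)
      ultimately show ?thesis by simp
    qed
    have "((\<lambda>_. 0::real) \<longlongrightarrow> e (0 + Suc n)) (at (0::real))"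
      apply (rule powser_limit_0_strong[of s "\<lambda>p. e (p+Suc n)" "\<lambda>_. 0"])
      using s * by auto
    then have "0 = e (0 + Suc n)" by (rule LIM_const_eq)
    then have "e (Suc n) = 0" by simp
    then show ?case using * s(1) by (intro conjI exI[of _ s]) auto
  qed
  then show ?thesis by (rule conjunct1)
qed

lemma cauchy_powser:
  fixes a b :: "nat \<Rightarrow> real"
  assumes "summable (\<lambda>p. norm (a p * t^p))" "summable (\<lambda>p. norm (b p * t^p))"
  shows "(\<lambda>p. (\<Sum>q\<le>p. a q * b (p-q)) * t^p) sums ((\<Sum>p. a p * t^p) * (\<Sum>p. b p * t^p))"
proof -
  have "(\<lambda>k. \<Sum>i\<le>k. (a i * t^i) * (b (k-i) * t^(k-i))) sums ((\<Sum>p. a p * t^p) * (\<Sum>p. b p * t^p))"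
    by (rule Cauchy_product_sums[OF assms])
  moreover have "(\<lambda>k. \<Sum>i\<le>k. (a i * t^i) * (b (k-i) * t^(k-i))) = (\<lambda>p. (\<Sum>q\<le>p. a q * b (p-q)) * t^p)"
  proof
    fix k
    have "(\<Sum>i\<le>k. (a i * t^i) * (b (k-i) * t^(k-i))) = (\<Sum>i\<le>k. (a i * b (k-i)) * t^k)"
    proof (rule sum.cong)
      fix i assume "i \<in> {..k}"
      then have "t^i * t^(k-i) = t^k" by (metis atMost_iff le_add_diff_inverse power_add)
      moreover have "(a i * t^i) * (b (k-i) * t^(k-i)) = (a i * b (k-i)) * (t^i * t^(k-i))"
        by (simp add: ac_simps)
      ultimately show "(a i * t^i) * (b (k-i) * t^(k-i)) = (a i * b (k-i)) * t^k"
        by simp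
    qed simp
    then show "(\<Sum>i\<le>k. (a i * t^i) * (b (k-i) * t^(k-i))) = (\<Sum>q\<le>k. a q * b (k-q)) * t^k"
      by (simp add: sum_distrib_right)
  qed
  ultimately show ?thesis by simp
qed

lemma bilinB_sym:
  assumes sym: "\<And>k i j. \<alpha> k i j = \<alpha> k j i"
  shows "bilinB \<alpha> X Y = bilinB \<alpha> Y X"
  unfolding bilinB_def vec_eq_iff
proof
  fix k
  have "(\<Sum>i\<in>UNIV. \<Sum>j\<in>UNIV. \<alpha> k i j * X $ i * Y $ j) = (\<Sum>j\<in>UNIV. \<Sum>i\<in>UNIV. \<alpha> k i j * X $ i * Y $ j)"
    by (rule sum.swap)
  also have "\<dots> = (\<Sum>i\<in>UNIV. \<Sum>j\<in>UNIV. \<alpha> k i j * Y $ i * X $ j)"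
    using sym by (simp add: ac_simps)
  finally show "(\<chi> k. \<Sum>i\<in>UNIV. \<Sum>j\<in>UNIV. \<alpha> k i j * X $ i * Y $ j) $ k =
        (\<chi> k. \<Sum>i\<in>UNIV. \<Sum>j\<in>UNIV. \<alpha> k i j * Y $ i * X $ j) $ k" by simp
qed

lemma bilinB_add_right: "bilinB \<alpha> X (Y + Z) = bilinB \<alpha> X Y + bilinB \<alpha> X Z"
  by (simp add: bilinB_def vec_eq_iff algebra_simps sum.distrib)

lemma bilinB_scale_right: "bilinB \<alpha> X (c *\<^sub>R Y) = c *\<^sub>R bilinB \<alpha> X Y"
  by (simp add: bilinB_def vec_eq_iff algebra_simps sum_distrib_left)

lemma bilinB_add_left: "bilinB \<alpha> (Y + Z) X = bilinB \<alpha> Y X + bilinB \<alpha> Z X"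
  by (simp add: bilinB_def vec_eq_iff algebra_simps sum.distrib)

lemma bilinB_scale_left: "bilinB \<alpha> (c *\<^sub>R Y) X = c *\<^sub>R bilinB \<alpha> Y X"
  by (simp add: bilinB_def vec_eq_iff algebra_simps sum_distrib_left)

lemma linA_add: "linA \<beta> (Y + Z) = linA \<beta> Y + linA \<beta> Z"
  by (simp add: linA_def vec_eq_iff algebra_simps sum.distrib)

lemma linA_scale: "linA \<beta> (c *\<^sub>R Y) = c *\<^sub>R linA \<beta> Y"
  by (simp add: linA_def vec_eq_iff algebra_simps sum_distrib_left)

lemma linC_add: "linC \<alpha> \<beta> X0 (Y + Z) = linC \<alpha> \<beta> X0 Y + linC \<alpha> \<beta> X0 Z"
  by (simp add: linC_def bilinB_add_left bilinB_add_right linA_add algebra_simps)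

lemma linC_scale: "linC \<alpha> \<beta> X0 (c *\<^sub>R Y) = c *\<^sub>R linC \<alpha> \<beta> X0 Y"
  by (simp add: linC_def bilinB_scale_left bilinB_scale_right linA_scale algebra_simps)

lemma linC_diff: "linC \<alpha> \<beta> X0 (Y - Z) = linC \<alpha> \<beta> X0 Y - linC \<alpha> \<beta> X0 Z"
  using linC_add[of \<alpha> \<beta> X0 "Y - Z" Z] by (simp add: algebra_simps)

lemma span2_decomp:
  fixes x y z :: "'a::real_vector"
  assumes "z \<in> span {x, y}"
  obtains a b where "z = a *\<^sub>R x + b *\<^sub>R y"
proof -
  from assms obtain a where "z - a *\<^sub>R x \<in> span {y}"
    using span_breakdown_eq by blast
  then obtain b where "z - a *\<^sub>R x = b *\<^sub>R y"
    using span_singleton by blast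
  then have "z = a *\<^sub>R x + b *\<^sub>R y" by (simp add: algebra_simps)
  then show ?thesis by (rule that)
qed

lemma coeff_eqs:
  fixes \<alpha> :: "'n::finite \<Rightarrow> 'm::finite \<Rightarrow> 'm \<Rightarrow> real"
    and \<beta> :: "'n \<Rightarrow> 'm \<Rightarrow> real" and \<gamma> :: "'n \<Rightarrow> real"
    and X0 :: "real^'m" and Xs :: "nat \<Rightarrow> real^'m"
  assumes fam: "analytic_family \<alpha> \<beta> \<gamma> X0 Xs" and p: "p > 0"
  shows "(\<Sum>q\<le>p. bilinB \<alpha> (Xs q) (Xs (p-q))) + linA \<beta> (Xs p) = 0"
proof -
  obtain r where r: "r > 0" and summ: "\<And>t. \<bar>t\<bar> < r \<Longrightarrow> summable (\<lambda>p. t^p *\<^sub>R Xs p)"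
    using fam unfolding analytic_family_def by blast
  have ev: "\<forall>\<^sub>F t in nhds (0::real). quadF \<alpha> \<beta> \<gamma> (\<Sum>p. t^p *\<^sub>R Xs p) = 0"
    using fam unfolding analytic_family_def by blast
  define xt where "xt t = (\<Sum>p. t^p *\<^sub>R Xs p)" for t :: real
  have comp: "(\<lambda>p. Xs p $ i * t^p) sums (xt t $ i)" if "\<bar>t\<bar> < r" for t i
  proof -
    have "(\<lambda>p. t^p *\<^sub>R Xs p) sums xt t" unfolding xt_def using summ[OF that] by (rule summable_sums)
    then have "(\<lambda>p. (t^p *\<^sub>R Xs p) $ i) sums (xt t $ i)"
      by (rule bounded_linear.sums[OF bounded_linear_vec_nth])
    then show ?thesis by (simp add: mult.commute)
  qed
  have absm: "summable (\<lambda>p. norm (Xs p $ i * t^p))" if "\<bar>t\<bar> < r" for t i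
  proof -
    define s where "s = (\<bar>t\<bar> + r) / 2"
    have "\<bar>s\<bar> < r" "\<bar>t\<bar> < \<bar>s\<bar>" using that by (auto simp: s_def)
    then have "summable (\<lambda>p. Xs p $ i * s^p)" using comp sums_summable by blast
    then show ?thesis by (rule powser_insidea) (use \<open>\<bar>t\<bar> < \<bar>s\<bar>\<close> in simp)
  qed
  define e where "e k p = (\<Sum>i\<in>UNIV. \<Sum>j\<in>UNIV. \<alpha> k i j * (\<Sum>q\<le>p. Xs q $ i * Xs (p-q) $ j))
      + (\<Sum>i\<in>UNIV. \<beta> k i * Xs p $ i) + (if p = 0 then \<gamma> k else 0)" for k p
  have esums: "(\<lambda>p. e k p * t^p) sums (quadF \<alpha> \<beta> \<gamma> (xt t) $ k)" if "\<bar>t\<bar> < r" for t k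
  proof -
    have prod: "(\<lambda>p. (\<Sum>q\<le>p. Xs q $ i * Xs (p-q) $ j) * t^p) sums (xt t $ i * xt t $ j)" for i j
      using cauchy_powser[OF absm[OF that, of i] absm[OF that, of j]]
        sums_unique[OF comp[OF that, of i]] sums_unique[OF comp[OF that, of j]] by simp
    have h1: "(\<lambda>p. \<Sum>i\<in>UNIV. \<Sum>j\<in>UNIV. \<alpha> k i j * ((\<Sum>q\<le>p. Xs q $ i * Xs (p-q) $ j) * t^p))
        sums (\<Sum>i\<in>UNIV. \<Sum>j\<in>UNIV. \<alpha> k i j * (xt t $ i * xt t $ j))"
      by (intro sums_sum sums_mult prod)
    have h2: "(\<lambda>p. \<Sum>i\<in>UNIV. \<beta> k i * (Xs p $ i * t^p)) sums (\<Sum>i\<in>UNIV. \<beta> k i * xt t $ i)"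
      by (intro sums_sum sums_mult comp that)
    have h3: "(\<lambda>p. if p = 0 then \<gamma> k else 0) sums \<gamma> k"
      using sums_single[of 0 "\<lambda>_. \<gamma> k"] by simp
    have "(\<lambda>p. (\<Sum>i\<in>UNIV. \<Sum>j\<in>UNIV. \<alpha> k i j * ((\<Sum>q\<le>p. Xs q $ i * Xs (p-q) $ j) * t^p))
        + (\<Sum>i\<in>UNIV. \<beta> k i * (Xs p $ i * t^p)) + (if p = 0 then \<gamma> k else 0))
      sums ((\<Sum>i\<in>UNIV. \<Sum>j\<in>UNIV. \<alpha> k i j * (xt t $ i * xt t $ j)) + (\<Sum>i\<in>UNIV. \<beta> k i * xt t $ i) + \<gamma> k)"
      by (intro sums_add h1 h2 h3)
    moreover have "(\<lambda>p. (\<Sum>i\<in>UNIV. \<Sum>j\<in>UNIV. \<alpha> k i j * ((\<Sum>q\<le>p. Xs q $ i * Xs (p-q) $ j) * t^p))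
        + (\<Sum>i\<in>UNIV. \<beta> k i * (Xs p $ i * t^p)) + (if p = 0 then \<gamma> k else 0)) = (\<lambda>p. e k p * t^p)"
      by (auto simp: fun_eq_iff e_def algebra_simps sum_distrib_left sum_distrib_right)
    moreover have "quadF \<alpha> \<beta> \<gamma> (xt t) $ k = (\<Sum>i\<in>UNIV. \<Sum>j\<in>UNIV. \<alpha> k i j * (xt t $ i * xt t $ j)) + (\<Sum>i\<in>UNIV. \<beta> k i * xt t $ i) + \<gamma> k"
      by (simp add: quadF_def mult.assoc)
    ultimately show ?thesis by simp
  qed
  have ezero: "e k p = 0" for k p
  proof (rule powser_unique_zero[OF r esums])
    show "\<forall>\<^sub>F t in nhds 0. quadF \<alpha> \<beta> \<gamma> (xt t) $ k = 0"
      using ev by (rule eventually_mono) (simp add: xt_def)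
  qed
  show ?thesis
  proof (rule vec_eq_iff[THEN iffD2], intro allI)
    fix k
    have "(\<Sum>q\<le>p. \<Sum>i\<in>UNIV. \<Sum>j\<in>UNIV. \<alpha> k i j * Xs q $ i * Xs (p - q) $ j)
        = (\<Sum>i\<in>UNIV. \<Sum>q\<le>p. \<Sum>j\<in>UNIV. \<alpha> k i j * Xs q $ i * Xs (p - q) $ j)"
      by (rule sum.swap)
    also have "\<dots> = (\<Sum>i\<in>UNIV. \<Sum>j\<in>UNIV. \<Sum>q\<le>p. \<alpha> k i j * Xs q $ i * Xs (p - q) $ j)"
      by (rule sum.cong[OF refl], rule sum.swap)
    also have "\<dots> = (\<Sum>i\<in>UNIV. \<Sum>j\<in>UNIV. \<alpha> k i j * (\<Sum>q\<le>p. Xs q $ i * Xs (p-q) $ j))"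
      by (simp add: sum_distrib_left mult.assoc)
    finally have "((\<Sum>q\<le>p. bilinB \<alpha> (Xs q) (Xs (p-q))) + linA \<beta> (Xs p)) $ k = e k p"
      using p by (simp add: e_def bilinB_def linA_def)
    then show "((\<Sum>q\<le>p. bilinB \<alpha> (Xs q) (Xs (p-q))) + linA \<beta> (Xs p)) $ k = 0 $ k"
      using ezero by simp
  qed
qed

lemma grp4: "(u::'a::ab_group_add) + v + w + v = 0 \<Longrightarrow> u = - v - v - w"
proof -
  assume h: "u + v + w + v = 0"
  have "u = (u + v + w + v) - v - v - w" by (simp add: algebra_simps)
  then show ?thesis using h by simp
qed

lemma grp3: "(u::'a::ab_group_add) + v + v = 0 \<Longrightarrow> u = - v - v"
proof -
  assume h: "u + v + v = 0"
  have "u = (u + v + v) - v - v" by (simp add: algebra_simps)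
  then show ?thesis using h by simp
qed

lemma fin_alg:
  fixes B11 B12 B22 :: "'a::real_vector"
  shows "((- (a *\<^sub>R B11 + b *\<^sub>R B12) - (a *\<^sub>R B11 + b *\<^sub>R B12) - B22)
     + (- (a *\<^sub>R B11 + b *\<^sub>R B12) - (a *\<^sub>R B11 + b *\<^sub>R B12) - B22))
     - (a+a+a+a) *\<^sub>R (- B11) - (b+b) *\<^sub>R (- B12 - B12) = - B22 - B22"
proof -
  have "(a+a+a+a) *\<^sub>R B11 = a *\<^sub>R B11 + a *\<^sub>R B11 + a *\<^sub>R B11 + a *\<^sub>R B11"
    by (simp only: scaleR_add_left)
  moreover have "(b+b) *\<^sub>R B12 = b *\<^sub>R B12 + b *\<^sub>R B12"
    by (simp only: scaleR_add_left)
  ultimately show ?thesis by (simp add: scaleR_diff_right scaleR_add_right algebra_simps)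
qed

theorem theorem4:
  fixes \<alpha> :: "'n::finite \<Rightarrow> 'm::finite \<Rightarrow> 'm \<Rightarrow> real"
    and \<beta> :: "'n \<Rightarrow> 'm \<Rightarrow> real" and \<gamma> :: "'n \<Rightarrow> real"
    and X0 :: "real^'m" and Xs :: "nat \<Rightarrow> real^'m"
  assumes sym: "\<And>k i j. \<alpha> k i j = \<alpha> k j i"
    and root: "quadF \<alpha> \<beta> \<gamma> X0 = 0"
    and fam: "analytic_family \<alpha> \<beta> \<gamma> X0 Xs"
    and X3: "Xs 3 \<in> span {Xs 1, Xs 2}"
    and X4: "Xs 4 \<in> span {Xs 1, Xs 2}"
  shows "\<forall>i\<in>{1::nat,2}. \<forall>j\<in>{1::nat,2}. \<exists>X\<in>span {Xs 1, Xs 2}.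
           linC \<alpha> \<beta> X0 X = - bilinB \<alpha> (Xs i) (Xs j) - bilinB \<alpha> (Xs j) (Xs i)"
proof -
  let ?B = "bilinB \<alpha>" and ?C = "linC \<alpha> \<beta> X0" and ?L = "span {Xs 1, Xs 2}"
  have X0: "Xs 0 = X0" using fam unfolding analytic_family_def by blast
  have sy: "?B X Y = ?B Y X" for X Y by (rule bilinB_sym[OF sym])
  have E: "(\<Sum>q\<le>p. ?B (Xs q) (Xs (p-q))) + linA \<beta> (Xs p) = 0" if "p > 0" for p
    using coeff_eqs[OF fam that] .
  have E2: "?C (Xs 2) + ?B (Xs 1) (Xs 1) = 0"
    using E[of 2] X0 by (simp add: eval_nat_numeral linC_def algebra_simps)
  have E3: "?C (Xs 3) + ?B (Xs 1) (Xs 2) + ?B (Xs 2) (Xs 1) = 0"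
    using E[of 3] X0 by (simp add: eval_nat_numeral linC_def algebra_simps)
  have E4: "?C (Xs 4) + ?B (Xs 1) (Xs 3) + ?B (Xs 2) (Xs 2) + ?B (Xs 3) (Xs 1) = 0"
    using E[of 4] X0 by (simp add: eval_nat_numeral linC_def algebra_simps)
  have m1: "Xs 1 \<in> ?L" and m2: "Xs 2 \<in> ?L" by (auto intro: span_base)
  obtain a b where ab: "Xs 3 = a *\<^sub>R Xs 1 + b *\<^sub>R Xs 2" using span2_decomp[OF X3] by blast
  have c11: "\<exists>X\<in>?L. ?C X = - ?B (Xs 1) (Xs 1) - ?B (Xs 1) (Xs 1)"
  proof (intro bexI)
    show "2 *\<^sub>R Xs 2 \<in> ?L" using m2 by (rule span_scale)
    show "?C (2 *\<^sub>R Xs 2) = - ?B (Xs 1) (Xs 1) - ?B (Xs 1) (Xs 1)"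
    proof -
      have "?C (Xs 2) = - ?B (Xs 1) (Xs 1)"
        using E2 by (simp add: algebra_simps eq_neg_iff_add_eq_0[symmetric])
      then show ?thesis unfolding linC_scale by (simp only: scaleR_2) simp
    qed
  qed
  have c12: "\<exists>X\<in>?L. ?C X = - ?B (Xs i) (Xs j) - ?B (Xs j) (Xs i)" if "{i,j} = {1,2}" for i j
  proof (intro bexI)
    show "Xs 3 \<in> ?L" by (rule X3)
    have "?C (Xs 3) = - ?B (Xs 1) (Xs 2) - ?B (Xs 2) (Xs 1)"
      using E3 by (simp add: algebra_simps eq_neg_iff_add_eq_0[symmetric])
    then show "?C (Xs 3) = - ?B (Xs i) (Xs j) - ?B (Xs j) (Xs i)"
      using that by (auto simp: doubleton_eq_iff)
  qed
  have c22: "\<exists>X\<in>?L. ?C X = - ?B (Xs 2) (Xs 2) - ?B (Xs 2) (Xs 2)"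
  proof (intro bexI)
    let ?X = "(Xs 4 + Xs 4) - (a+a+a+a) *\<^sub>R Xs 2 - (b+b) *\<^sub>R Xs 3"
    show "?X \<in> ?L" using X3 X4 m2 by (intro span_diff span_scale span_add)
    have B13: "?B (Xs 1) (Xs 3) = a *\<^sub>R ?B (Xs 1) (Xs 1) + b *\<^sub>R ?B (Xs 1) (Xs 2)"
      unfolding ab by (simp add: bilinB_add_right bilinB_scale_right)
    have c4: "?C (Xs 4) = - ?B (Xs 1) (Xs 3) - ?B (Xs 1) (Xs 3) - ?B (Xs 2) (Xs 2)"
      using E4 sy[of "Xs 3" "Xs 1"] by (intro grp4) simp
    have c2: "?C (Xs 2) = - ?B (Xs 1) (Xs 1)"
      using E2 by (simp add: algebra_simps eq_neg_iff_add_eq_0[symmetric])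
    have c3: "?C (Xs 3) = - ?B (Xs 1) (Xs 2) - ?B (Xs 1) (Xs 2)"
      using E3 sy[of "Xs 2" "Xs 1"] by (intro grp3) simp
    have "?C ?X = (?C (Xs 4) + ?C (Xs 4)) - (a+a+a+a) *\<^sub>R ?C (Xs 2) - (b+b) *\<^sub>R ?C (Xs 3)"
      by (simp only: linC_diff linC_scale linC_add)
    also have "\<dots> = - ?B (Xs 2) (Xs 2) - ?B (Xs 2) (Xs 2)"
      unfolding c4 c2 c3 B13 by (rule fin_alg)
    finally show "?C ?X = - ?B (Xs 2) (Xs 2) - ?B (Xs 2) (Xs 2)" .
  qed
  show ?thesis
    using c11 c22 c12[of 1 2] c12[of 2 1] by auto
qed

end
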